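(* Let $\{\varphi_n\}$ be a generalized Riesz system in a Hilbert space $\mathcal H$ with constructing pair $(\{e_n\},T)$, and put $\psi^T_n=(T^{-1})^*e_n$, $n\ge0$. Suppose that $\{e_n\}\subset D(T^*T)\cap D(T^{-1}(T^{-1})^* )$. Then $(\{\varphi_n\},\{\psi^T_n\})$ is a $(D(T^* )\cap D(T^{-1}))$-quasi basis, and $T=\big(\overline{T_{e,\psi^T}|_{D(T^* )\cap D(T^{-1})}}\big)^{-1}$, $(T^{-1})^*=\big(\overline{T_{e,\varphi}|_{D(T^* )\cap D(T^{-1})}}\big)^{-1}$.
   Context: A sequence $\{\varphi_n\}$ is a generalized Riesz system if there exist an ONB $\{e_n\}$ and a densely defined closed operator $T$ with densely defined inverse such that $e_n\in D(T)\cap D((T^{-1})^* )$ and $Te_n=\varphi_n$ for all $n$; $(\{e_n\},T)$ is a constructing pair. Inner product linear in the first argument. For a sequence $\{\chi_n\}$, $D(\chi)=\{x:\sum_n|\langle x,\chi_n\rangle|^2<\infty\}$ and $D_\chi$ is its linear span; $T_{e,\chi}$ is the operator with domain $D(\chi)$, $T_{e,\chi}x=\sum_n\langle x,\chi_n\rangle e_n$. For biorthogonal sequences $\{\varphi_n\},\{\psi_n\}$ and a dense subspace $\mathcal D$ with $D_\varphi\cup D_\psi\subseteq\mathcal D\subseteq D(\varphi)\cap D(\psi)$, the pair is a $\mathcal D$-quasi basis if $\sum_k\langle x,\varphi_k\rangle\langle\psi_k,y\rangle=\langle x,y\rangle$ for all $x,y\in\mathcal D$. Bars denote closures, $|$ restrictions.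 *)

theory Defs
  imports "HOL-Analysis.Analysis"
begin

class complex_vector = real_vector +
  fixes scaleC :: "complex \<Rightarrow> 'a \<Rightarrow> 'a"
  assumes scaleC_add_right: "scaleC a (x + y) = scaleC a x + scaleC a y"
    and scaleC_add_left: "scaleC (a + b) x = scaleC a x + scaleC b x"
    and scaleC_scaleC: "scaleC a (scaleC b x) = scaleC (a * b) x"
    and scaleC_one: "scaleC 1 x = x"
    and scaleR_scaleC: "scaleR r x = scaleC (complex_of_real r) x"

text \<open>Inner product, linear in the first argument.\<close>
class complex_inner = complex_vector + real_normed_vector +
  fixes cinner :: "'a \<Rightarrow> 'a \<Rightarrow> complex"
  assumes cinner_commute: "cinner x y = cnj (cinner y x)"
    and cinner_add_left: "cinner (x + y) z = cinner x z + cinner y z"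
    and cinner_scaleC_left: "cinner (scaleC r x) y = r * cinner x y"
    and cinner_ge_zero: "0 \<le> Re (cinner x x)"
    and cinner_eq_zero_iff: "cinner x x = 0 \<longleftrightarrow> x = 0"
    and norm_eq_sqrt_cinner: "norm x = sqrt (Re (cinner x x))"

class chilbert = complex_inner + complete_space

text \<open>A (possibly unbounded) operator is represented by its graph, a subset of H \<times> H.\<close>

definition is_op :: "('a::complex_vector \<times> 'a) set \<Rightarrow> bool" where
  "is_op G \<longleftrightarrow> (0, 0) \<in> G
     \<and> (\<forall>x y u v. (x, y) \<in> G \<longrightarrow> (u, v) \<in> G \<longrightarrow> (x + u, y + v) \<in> G)
     \<and> (\<forall>c x y. (x, y) \<in> G \<longrightarrow> (scaleC c x, scaleC c y) \<in> G)
     \<and> (\<forall>x y z. (x, y) \<in> G \<longrightarrow> (x, z) \<in> G \<longrightarrow> y = z)"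

definition app :: "('a \<times> 'a) set \<Rightarrow> 'a \<Rightarrow> 'a" where
  "app G x = (THE y. (x, y) \<in> G)"

definition densely_defined :: "('a::topological_space \<times> 'a) set \<Rightarrow> bool" where
  "densely_defined G \<longleftrightarrow> closure (Domain G) = UNIV"

definition adj :: "('a::complex_inner \<times> 'a) set \<Rightarrow> ('a \<times> 'a) set" where
  "adj G = {(y, z). \<forall>(x, w) \<in> G. cinner w y = cinner x z}"

definition restr :: "('a \<times> 'a) set \<Rightarrow> 'a set \<Rightarrow> ('a \<times> 'a) set" where
  "restr G D = {(x, y) \<in> G. x \<in> D}"

text \<open>Operator product A B (first B, then A) has graph  B O A;  the inverse is the converse.\<close>

definition ONB :: "(nat \<Rightarrow> 'a::complex_inner) \<Rightarrow> bool" where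
  "ONB e \<longleftrightarrow> (\<forall>n m. cinner (e n) (e m) = (if n = m then 1 else 0))
     \<and> (\<forall>x. (\<forall>n. cinner x (e n) = 0) \<longrightarrow> x = 0)"

definition cspan :: "'a::complex_vector set \<Rightarrow> 'a set" where
  "cspan S = {x. \<exists>F c. finite F \<and> F \<subseteq> S \<and> x = (\<Sum>v\<in>F. scaleC (c v) v)}"

definition csubspace :: "'a::complex_vector set \<Rightarrow> bool" where
  "csubspace S \<longleftrightarrow> 0 \<in> S \<and> (\<forall>x\<in>S. \<forall>y\<in>S. x + y \<in> S) \<and> (\<forall>c. \<forall>x\<in>S. scaleC c x \<in> S)"

definition Dseq :: "(nat \<Rightarrow> 'a::complex_inner) \<Rightarrow> 'a set" where
  "Dseq chi = {x. summable (\<lambda>n. (cmod (cinner x (chi n)))\<^sup>2)}"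

definition Dspan :: "(nat \<Rightarrow> 'a::complex_vector) \<Rightarrow> 'a set" where
  "Dspan chi = cspan (range chi)"

definition T_seq :: "(nat \<Rightarrow> 'a::complex_inner) \<Rightarrow> (nat \<Rightarrow> 'a) \<Rightarrow> ('a \<times> 'a) set" where
  "T_seq e chi = {(x, y). x \<in> Dseq chi \<and> y = (\<Sum>n. scaleC (cinner x (chi n)) (e n))}"

definition biorthogonal :: "(nat \<Rightarrow> 'a::complex_inner) \<Rightarrow> (nat \<Rightarrow> 'a) \<Rightarrow> bool" where
  "biorthogonal \<phi> \<psi> \<longleftrightarrow> (\<forall>n m. cinner (\<phi> n) (\<psi> m) = (if n = m then 1 else 0))"

definition quasi_basis :: "(nat \<Rightarrow> 'a::complex_inner) \<Rightarrow> (nat \<Rightarrow> 'a) \<Rightarrow> 'a set \<Rightarrow> bool" where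
  "quasi_basis \<phi> \<psi> D \<longleftrightarrow> biorthogonal \<phi> \<psi> \<and> csubspace D \<and> closure D = UNIV
     \<and> Dspan \<phi> \<union> Dspan \<psi> \<subseteq> D \<and> D \<subseteq> Dseq \<phi> \<inter> Dseq \<psi>
     \<and> (\<forall>x\<in>D. \<forall>y\<in>D. (\<lambda>k. cinner x (\<phi> k) * cinner (\<psi> k) y) sums cinner x y)"

definition constructing_pair :: "(nat \<Rightarrow> 'a::complex_inner) \<Rightarrow> ('a \<times> 'a) set \<Rightarrow> (nat \<Rightarrow> 'a) \<Rightarrow> bool" where
  "constructing_pair e T \<phi> \<longleftrightarrow> ONB e \<and> is_op T \<and> closed T \<and> densely_defined T
     \<and> is_op (converse T) \<and> densely_defined (converse T)
     \<and> (\<forall>n. e n \<in> Domain T \<inter> Domain (adj (converse T)) \<and> app T (e n) = \<phi> n)"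

end

theory Submission
  imports Defs
begin


lemma scaleC_zero_left[simp]: "scaleC 0 x = 0"
proof -
  have "scaleC 0 x = scaleR 0 x" by (simp only: scaleR_scaleC of_real_0)
  then show ?thesis by simp
qed
lemma scaleC_zero_right[simp]: "scaleC a 0 = 0"
proof -
  have "scaleC a 0 + scaleC a 0 = scaleC a 0 + 0" by (simp flip: scaleC_add_right)
  then show ?thesis by (rule add_left_imp_eq)
qed
lemma scaleC_minus_left: "scaleC (- a) x = - scaleC a x"
proof -
  have "scaleC (- a) x + scaleC a x = 0" by (simp flip: scaleC_add_left)
  then show ?thesis by (simp add: eq_neg_iff_add_eq_0)
qed
lemma scaleC_minus1: "scaleC (-1) x = - x"
  by (simp add: scaleC_minus_left scaleC_one)
lemma scaleC_minus_right: "scaleC a (- x) = - scaleC a x"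
proof -
  have "scaleC a (- x) + scaleC a x = 0" by (simp flip: scaleC_add_right)
  then show ?thesis by (simp add: eq_neg_iff_add_eq_0)
qed
lemma scaleC_diff_right: "scaleC a (x - y) = scaleC a x - scaleC a y"
  by (simp only: diff_conv_add_uminus scaleC_add_right scaleC_minus_right)
lemma scaleC_sum_right: "scaleC a (sum f F) = (\<Sum>i\<in>F. scaleC a (f i))"
  by (induction F rule: infinite_finite_induct) (auto simp: scaleC_add_right)

lemma cinner_zero_left[simp]: "cinner 0 y = 0"
proof -
  have "cinner 0 y + cinner 0 y = cinner 0 y + 0" by (simp flip: cinner_add_left)
  then show ?thesis by (rule add_left_imp_eq)
qed
lemma cinner_zero_right[simp]: "cinner x 0 = 0"
  by (simp add: cinner_commute[of x 0])
lemma cinner_add_right: "cinner x (y + z) = cinner x y + cinner x z"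
  by (simp add: cinner_commute[of x "y+z"] cinner_commute[of x y] cinner_commute[of x z] cinner_add_left)
lemma cinner_scaleC_right: "cinner x (scaleC r y) = cnj r * cinner x y"
  by (simp add: cinner_commute[of x "scaleC r y"] cinner_commute[of x y] cinner_scaleC_left)
lemma cinner_minus_left: "cinner (- x) y = - cinner x y"
proof -
  have "cinner (scaleC (-1) x) y = (-1) * cinner x y" by (rule cinner_scaleC_left)
  then show ?thesis by (simp add: scaleC_minus1)
qed
lemma cinner_minus_right: "cinner x (- y) = - cinner x y"
  by (simp add: cinner_commute[of x "-y"] cinner_commute[of x y] cinner_minus_left)
lemma cinner_diff_left: "cinner (x - y) z = cinner x z - cinner y z"
  by (simp only: diff_conv_add_uminus cinner_add_left cinner_minus_left)
lemma cinner_diff_right: "cinner x (y - z) = cinner x y - cinner x z"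
  by (simp only: diff_conv_add_uminus cinner_add_right cinner_minus_right)
lemma cinner_sum_left: "cinner (sum f F) y = (\<Sum>i\<in>F. cinner (f i) y)"
  by (induction F rule: infinite_finite_induct) (auto simp: cinner_add_left)
lemma cinner_sum_right: "cinner y (sum f F) = (\<Sum>i\<in>F. cinner y (f i))"
  by (induction F rule: infinite_finite_induct) (auto simp: cinner_add_right)
lemma cinner_scaleR_left: "cinner (scaleR r x) y = of_real r * cinner x y"
  by (simp add: scaleR_scaleC cinner_scaleC_left)
lemma cinner_scaleR_right: "cinner x (scaleR r y) = of_real r * cinner x y"
  by (simp add: scaleR_scaleC cinner_scaleC_right)

lemma cinner_self_Im: "Im (cinner x x) = 0"
proof -
  have "Im (cinner x x) = Im (cnj (cinner x x))" by (rule arg_cong[OF cinner_commute])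
  then show ?thesis by simp
qed
lemma norm_sq_cinner: "(norm x)^2 = Re (cinner x x)"
  using norm_eq_sqrt_cinner[of x] cinner_ge_zero[of x] by simp
lemma cinner_self: "cinner x x = complex_of_real ((norm x)^2)"
  by (simp add: complex_eq_iff norm_sq_cinner cinner_self_Im)

lemma norm_add_sq: "(norm (x + y))^2 = (norm x)^2 + (norm y)^2 + 2 * Re (cinner x y)"
proof -
  have "cinner (x+y) (x+y) = cinner x x + cinner y y + (cinner x y + cnj (cinner x y))"
    by (simp add: cinner_add_left cinner_add_right cinner_commute[of y x])
  then show ?thesis by (simp add: norm_sq_cinner)
qed

lemma norm_diff_sq: "(norm (x - y))^2 = (norm x)^2 + (norm y)^2 - 2 * Re (cinner x y)"
  using norm_add_sq[of x "- y"] by (simp add: cinner_minus_right)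

lemma Re_cinner_le: "Re (cinner x y) \<le> norm x * norm y"
proof -
  have "(norm (x + y))^2 \<le> (norm x + norm y)^2"
    by (simp add: norm_triangle_ineq power_mono)
  then show ?thesis by (simp add: norm_add_sq power2_sum)
qed

lemma norm_scaleC: "norm (scaleC c (x::'a::complex_inner)) = cmod c * norm x"
proof -
  have cc: "c * cnj c = complex_of_real ((cmod c)^2)" by (rule complex_norm_square[symmetric])
  have "cinner (scaleC c x) (scaleC c x) = (c * cnj c) * cinner x x"
    by (simp add: cinner_scaleC_left cinner_scaleC_right mult.assoc)
  also have "\<dots> = complex_of_real ((cmod c)^2 * (norm x)^2)"
    by (simp only: cc cinner_self of_real_mult)
  finally have "(norm (scaleC c x))^2 = (cmod c * norm x)^2"
    by (simp add: norm_sq_cinner power_mult_distrib)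
  then show ?thesis
    by (simp add: power2_eq_imp_eq)
qed

lemma cinner_CS: "cmod (cinner x y) \<le> norm x * norm y"
proof (cases "cinner x y = 0")
  case True then show ?thesis by simp
next
  case False
  define c where "c = cinner x y"
  define u where "u = cnj c / complex_of_real (cmod c)"
  have c0: "c \<noteq> 0" using False by (simp add: c_def)
  have cu: "cmod u = 1" using c0 by (simp add: u_def norm_divide)
  have cc: "cnj c * c = (complex_of_real (cmod c))^2" using complex_norm_square[of c] by (simp add: mult.commute)
  have "u * c = complex_of_real (cmod c)"
    using c0 cc by (simp add: u_def power2_eq_square)
  then have "cinner (scaleC u x) y = complex_of_real (cmod c)"
    by (simp add: cinner_scaleC_left c_def)
  then have "cmod c = Re (cinner (scaleC u x) y)" by simp
  also have "\<dots> \<le> norm x * norm y" using Re_cinner_le[of "scaleC u x" y] by (simp add: norm_scaleC cu)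
  finally show ?thesis by (simp add: c_def)
qed

lemma bounded_bilinear_cinner: "bounded_bilinear cinner"
  apply standard
  apply (simp_all add: cinner_add_left cinner_add_right cinner_scaleR_left cinner_scaleR_right scaleR_conv_of_real)
  by (rule exI[of _ 1]) (simp add: cinner_CS)



instance chilbert \<subseteq> banach ..

definition orthon :: "(nat \<Rightarrow> 'a::complex_inner) \<Rightarrow> bool" where
  "orthon e \<longleftrightarrow> (\<forall>n m. cinner (e n) (e m) = (if n = m then 1 else 0))"

lemma ONB_orthon: "ONB e \<Longrightarrow> orthon e"
  by (simp add: ONB_def orthon_def)

lemma cinner_sum_scaleC_right:
  "cinner a (\<Sum>m\<in>F. scaleC (d m) (e m)) = (\<Sum>m\<in>F. cnj (d m) * cinner a (e m))"
  by (simp add: cinner_sum_right cinner_scaleC_right)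

lemma orthon_inner_e_sum:
  assumes on: "orthon e" and F: "finite F" and n: "n \<in> F"
  shows "cinner (e n) (\<Sum>m\<in>F. scaleC (d m) (e m)) = cnj (d n)"
proof -
  have "(\<Sum>m\<in>F. cnj (d m) * cinner (e n) (e m)) = (\<Sum>m\<in>F. if n = m then cnj (d m) else 0)"
    by (rule sum.cong) (use on in \<open>auto simp: orthon_def\<close>)
  then show ?thesis using F n by (simp add: cinner_sum_scaleC_right sum.delta)
qed

lemma orthon_sum_inner:
  assumes on: "orthon e" and F: "finite F"
  shows "cinner (\<Sum>n\<in>F. scaleC (c n) (e n)) (\<Sum>m\<in>F. scaleC (d m) (e m)) = (\<Sum>n\<in>F. c n * cnj (d n))"
proof -
  have "cinner (\<Sum>n\<in>F. scaleC (c n) (e n)) (\<Sum>m\<in>F. scaleC (d m) (e m))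
      = (\<Sum>n\<in>F. c n * cinner (e n) (\<Sum>m\<in>F. scaleC (d m) (e m)))"
    by (simp add: cinner_sum_left cinner_scaleC_left)
  also have "\<dots> = (\<Sum>n\<in>F. c n * cnj (d n))"
    by (rule sum.cong) (simp_all add: orthon_inner_e_sum[OF on F])
  finally show ?thesis .
qed

lemma orthon_norm_sum:
  assumes on: "orthon e" and F: "finite F"
  shows "(norm (\<Sum>n\<in>F. scaleC (c n) (e n)))^2 = (\<Sum>n\<in>F. (cmod (c n))^2)"
  by (simp add: norm_sq_cinner orthon_sum_inner[OF on F] complex_mult_cnj Re_sum cmod_power2)


lemma bessel_partial:
  assumes on: "orthon e"
  shows "(\<Sum>n<N. (cmod (cinner a (e n)))^2) \<le> (norm a)^2"
proof -
  define c where "c n = cinner a (e n)" for n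
  define s where "s = (\<Sum>n<N. scaleC (c n) (e n))"
  define Q where "Q = (\<Sum>n<N. (cmod (c n))^2)"
  have sq: "\<And>z. z * cnj z = complex_of_real ((cmod z)^2)"
    by (rule complex_norm_square[symmetric])
  have sq': "\<And>z. cnj z * z = complex_of_real ((cmod z)^2)"
    by (simp add: sq mult.commute del: of_real_power)
  have ss: "cinner s s = complex_of_real Q"
    unfolding s_def Q_def by (simp add: orthon_sum_inner[OF on] sq del: of_real_power)
  have as: "cinner a s = complex_of_real Q"
    unfolding s_def Q_def by (simp add: cinner_sum_scaleC_right c_def[symmetric] sq' del: of_real_power)
  have sa: "cinner s a = complex_of_real Q"
    using as by (metis cinner_commute complex_cnj_complex_of_real)
  have "cinner (a - s) (a - s) = cinner a a - complex_of_real Q"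
    by (simp add: cinner_diff_left cinner_diff_right ss as sa)
  then have "0 \<le> Re (cinner a a) - Q" using cinner_ge_zero[of "a - s"] by simp
  then show ?thesis by (simp add: norm_sq_cinner Q_def c_def)
qed

lemma bessel:
  assumes on: "orthon e"
  shows "summable (\<lambda>n. (cmod (cinner a (e n)))^2)"
  by (rule summableI_nonneg_bounded[where x="(norm a)^2"]) (auto intro: bessel_partial[OF on])

lemma orthon_summable:
  fixes e :: "nat \<Rightarrow> 'a::chilbert"
  assumes on: "orthon e"
  shows "summable (\<lambda>n. scaleC (cinner a (e n)) (e n))"
proof -
  define c where "c n = cinner a (e n)" for n
  have sm: "summable (\<lambda>n. (cmod (c n))^2)" unfolding c_def by (rule bessel[OF on])
  have "\<exists>N. \<forall>m\<ge>N. \<forall>n. norm (\<Sum>k=m..<n. scaleC (c k) (e k)) < r" if r: "r > 0" for r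
  proof -
    from sm r obtain N where N: "\<forall>m\<ge>N. \<forall>n. norm (\<Sum>k=m..<n. (cmod (c k))^2) < r^2"
      unfolding summable_Cauchy by (meson zero_less_power)
    show ?thesis
    proof (intro exI allI impI)
      fix m n assume "m \<ge> N"
      with N have lt: "norm (\<Sum>k=m..<n. (cmod (c k))^2) < r^2" by blast
      have "(norm (\<Sum>k=m..<n. scaleC (c k) (e k)))^2 = (\<Sum>k=m..<n. (cmod (c k))^2)"
        by (rule orthon_norm_sum[OF on]) simp
      also have "\<dots> < r^2" using lt by (simp add: sum_nonneg)
      finally show "norm (\<Sum>k=m..<n. scaleC (c k) (e k)) < r"
        using r by (meson power_less_imp_less_base less_le)
    qed
  qed
  then show ?thesis unfolding c_def summable_Cauchy by blast
qed

lemma bl_cinner_left: "bounded_linear (\<lambda>x. cinner x b)"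
  by (rule bounded_bilinear.bounded_linear_left[OF bounded_bilinear_cinner])
lemma bl_cinner_right: "bounded_linear (\<lambda>x. cinner b x)"
  by (rule bounded_bilinear.bounded_linear_right[OF bounded_bilinear_cinner])

lemma orthon_sums_coef:
  fixes e :: "nat \<Rightarrow> 'a::chilbert"
  assumes on: "orthon e" and sm: "(\<lambda>n. scaleC (c n) (e n)) sums s"
  shows "cinner s (e m) = c m"
proof -
  have "(\<lambda>n. cinner (scaleC (c n) (e n)) (e m)) sums cinner s (e m)"
    by (rule bounded_linear.sums[OF bl_cinner_left sm])
  moreover have "(\<lambda>n. cinner (scaleC (c n) (e n)) (e m)) = (\<lambda>n. if n = m then c n else 0)"
    using on by (auto simp: orthon_def cinner_scaleC_left)
  ultimately show ?thesis using sums_single[of m c] sums_unique2 by metis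
qed

lemma onb_sums:
  fixes e :: "nat \<Rightarrow> 'a::chilbert"
  assumes onb: "ONB e"
  shows "(\<lambda>n. scaleC (cinner a (e n)) (e n)) sums a"
proof -
  have on: "orthon e" using onb by (rule ONB_orthon)
  define s where "s = (\<Sum>n. scaleC (cinner a (e n)) (e n))"
  have sm: "(\<lambda>n. scaleC (cinner a (e n)) (e n)) sums s"
    unfolding s_def using orthon_summable[OF on] by (rule summable_sums)
  have "\<forall>m. cinner (a - s) (e m) = 0"
    using orthon_sums_coef[OF on sm] by (simp add: cinner_diff_left)
  with onb have "a - s = 0" unfolding ONB_def by blast
  then show ?thesis using sm by simp
qed

lemma parseval:
  fixes e :: "nat \<Rightarrow> 'a::chilbert"
  assumes onb: "ONB e"
  shows "(\<lambda>n. cinner a (e n) * cinner (e n) b) sums cinner a b"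
proof -
  have "(\<lambda>n. cinner (scaleC (cinner a (e n)) (e n)) b) sums cinner a b"
    by (rule bounded_linear.sums[OF bl_cinner_left onb_sums[OF onb]])
  then show ?thesis by (simp add: cinner_scaleC_left)
qed



instantiation prod :: (complex_vector, complex_vector) complex_vector
begin
definition scaleC_prod_def: "scaleC c x = (scaleC c (fst x), scaleC c (snd x))"
instance
  by standard (simp_all add: scaleC_prod_def prod_eq_iff scaleC_add_right scaleC_add_left
      scaleC_scaleC scaleC_one scaleR_scaleC)
end

lemma scaleC_Pair[simp]: "scaleC c (a, b) = (scaleC c a, scaleC c b)"
  by (simp add: scaleC_prod_def)

instantiation prod :: (complex_inner, complex_inner) complex_inner
begin
definition cinner_prod_def: "cinner x y = cinner (fst x) (fst y) + cinner (snd x) (snd y)"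
instance
proof
  fix x y z :: "'a \<times> 'b" and r :: complex
  show "cinner x y = cnj (cinner y x)"
    by (simp add: cinner_prod_def cinner_commute[of "fst x"] cinner_commute[of "snd x"])
  show "cinner (x + y) z = cinner x z + cinner y z"
    by (simp add: cinner_prod_def cinner_add_left)
  show "cinner (scaleC r x) y = r * cinner x y"
    by (simp add: cinner_prod_def scaleC_prod_def cinner_scaleC_left distrib_left)
  show "0 \<le> Re (cinner x x)"
    by (simp add: cinner_prod_def cinner_ge_zero add_nonneg_nonneg)
  show "(cinner x x = 0) = (x = 0)"
  proof
    assume h: "cinner x x = 0"
    have "Re (cinner x x) = 0" using h by simp
    then have "(norm (fst x))^2 + (norm (snd x))^2 = 0"
      by (simp add: cinner_prod_def norm_sq_cinner)
    then have "fst x = 0" "snd x = 0"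
      by (simp_all add: add_nonneg_eq_0_iff)
    then show "x = 0" by (simp add: prod_eq_iff)
  qed (simp add: cinner_prod_def)
  show "norm x = sqrt (Re (cinner x x))"
    by (simp add: norm_prod_def cinner_prod_def norm_sq_cinner)
qed
end

instance prod :: (chilbert, chilbert) chilbert ..

lemma cinner_Pair: "cinner (a, b) (c, d) = cinner a c + cinner b d"
  by (simp add: cinner_prod_def)

lemma csubspace_diff: "csubspace M \<Longrightarrow> x \<in> M \<Longrightarrow> y \<in> M \<Longrightarrow> x - y \<in> M"
proof -
  assume M: "csubspace M" and x: "x \<in> M" and y: "y \<in> M"
  have "scaleC (-1) y \<in> M" using M y by (simp add: csubspace_def)
  then have "x + scaleC (-1) y \<in> M" using M x by (simp add: csubspace_def)
  then show "x - y \<in> M" by (simp add: scaleC_minus1)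
qed

lemma csubspace_scaleR: "csubspace M \<Longrightarrow> x \<in> M \<Longrightarrow> scaleR r x \<in> M"
  unfolding csubspace_def by (simp add: scaleR_scaleC)

lemma bounded_linear_scaleC: "bounded_linear (scaleC c :: 'a::complex_inner \<Rightarrow> 'a)"
proof (rule bounded_linear_intro[where K="cmod c"])
  fix x y :: 'a and r :: real
  show "scaleC c (x + y) = scaleC c x + scaleC c y" by (rule scaleC_add_right)
  show "scaleC c (scaleR r x) = scaleR r (scaleC c x)"
    by (simp add: scaleR_scaleC scaleC_scaleC mult.commute)
  show "norm (scaleC c x) \<le> norm x * cmod c" by (simp add: norm_scaleC mult.commute)
qed

lemma csubspace_closure:
  fixes M :: "'a::complex_inner set"
  assumes M: "csubspace M"
  shows "csubspace (closure M)"
proof -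
  have "(\<lambda>z. fst z + snd z) ` closure (M \<times> M) \<subseteq> closure M"
  proof (rule image_closure_subset)
    show "continuous_on (closure (M \<times> M)) (\<lambda>z. fst z + snd z)"
      by (intro continuous_intros)
    show "(\<lambda>z. fst z + snd z) ` (M \<times> M) \<subseteq> closure M"
    proof
      fix w assume "w \<in> (\<lambda>z. fst z + snd z) ` (M \<times> M)"
      then obtain a b where ab: "a \<in> M" "b \<in> M" "w = a + b" by auto
      then have "w \<in> M" using M by (simp add: csubspace_def)
      then show "w \<in> closure M" using closure_subset by blast
    qed
  qed simp
  then have add: "\<forall>x\<in>closure M. \<forall>y\<in>closure M. x + y \<in> closure M"
    unfolding closure_Times by force
  have sc: "scaleC c x \<in> closure M" if "x \<in> closure M" for c x
  proof -
    have "scaleC c ` closure M \<subseteq> closure M"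
    proof (rule image_closure_subset)
      show "continuous_on (closure M) (scaleC c)"
        by (rule linear_continuous_on[OF bounded_linear_scaleC])
      show "scaleC c ` M \<subseteq> closure M"
      proof
        fix w assume "w \<in> scaleC c ` M"
        then obtain a where a: "a \<in> M" "w = scaleC c a" by auto
        then have "w \<in> M" using M by (simp add: csubspace_def)
        then show "w \<in> closure M" using closure_subset by blast
      qed
    qed simp
    then show ?thesis using that by blast
  qed
  have "0 \<in> closure M" using M closure_subset by (auto simp: csubspace_def)
  then show ?thesis using add sc unfolding csubspace_def by blast
qed

lemma infdist_approx:
  assumes "A \<noteq> {}" "infdist x A < r"
  shows "\<exists>a\<in>A. dist x a < r"
proof -
  have "bdd_below ((\<lambda>a. dist x a) ` A)" by (rule bdd_belowI[of _ 0]) auto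
  then show ?thesis using assms by (simp add: infdist_notempty cINF_less_iff)
qed

lemma var_zero:
  fixes a b :: real
  assumes b: "b \<ge> 0" and h: "\<And>t. 0 \<le> t^2 * b - 2 * t * a"
  shows "a = 0"
proof -
  define t where "t = a / (b + 2)"
  have "0 \<le> t^2 * b - 2 * t * a" by (rule h)
  also have "t^2 * b - 2 * t * a = t^2 * b - 2 * t * (t * (b + 2))"
    using b by (simp add: t_def)
  also have "\<dots> = - (t^2 * (b + 4))" by (simp add: algebra_simps power2_eq_square)
  finally have "t^2 * (b + 4) \<le> 0" by simp
  moreover have "t^2 * (b + 4) \<ge> 0" using b by simp
  ultimately have "t^2 * (b + 4) = 0" by linarith
  then have "t = 0" using b by simp
  then show "a = 0" using b by (simp add: t_def)
qed

lemma projection_exists: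
  fixes M :: "'a::chilbert set"
  assumes cl: "closed M" and M: "csubspace M"
  shows "\<exists>m\<in>M. \<forall>g\<in>M. cinner (p - m) g = 0"
proof -
  have ne: "M \<noteq> {}" using M by (auto simp: csubspace_def)
  define d where "d = infdist p M"
  have d0: "d \<ge> 0" by (simp add: d_def infdist_nonneg)
  have ex: "\<exists>m\<in>M. (dist p m)^2 < d^2 + inverse (real (Suc k))" for k
  proof -
    have "sqrt (d^2) < sqrt (d^2 + inverse (real (Suc k)))"
      by (rule real_sqrt_less_mono) simp
    then have "d < sqrt (d^2 + inverse (real (Suc k)))"
      using d0 by (simp add: real_sqrt_abs)
    then obtain m where m: "m \<in> M" "dist p m < sqrt (d^2 + inverse (real (Suc k)))"
      using infdist_approx[OF ne] unfolding d_def by blast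
    have "(dist p m)^2 < (sqrt (d^2 + inverse (real (Suc k))))^2"
      by (rule power_strict_mono[OF m(2)]) simp_all
    then have "(dist p m)^2 < d^2 + inverse (real (Suc k))"
      by (simp add: add_nonneg_nonneg)
    then show ?thesis using m by blast
  qed
  then obtain m where mM: "\<And>k. m k \<in> M" and md: "\<And>k. (dist p (m k))^2 < d^2 + inverse (real (Suc k))"
    by metis
  have dle: "d \<le> norm (p - x)" if "x \<in> M" for x
    using infdist_le[OF that, of p] by (simp add: d_def dist_norm)
  have para: "(norm (x - y))^2 = 2 * (norm x)^2 + 2 * (norm y)^2 - (norm (x + y))^2" for x y :: 'a
    using norm_add_sq[of x y] norm_diff_sq[of x y] by simp
  have cd: "(norm (m j - m k))^2 \<le> 2 * inverse (real (Suc j)) + 2 * inverse (real (Suc k))" for j k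
  proof -
    define mid where "mid = scaleR (1/2) (m j + m k)"
    have midM: "mid \<in> M" unfolding mid_def
      by (rule csubspace_scaleR[OF M]) (use M mM in \<open>auto simp: csubspace_def\<close>)
    have e1: "(p - m k) + (p - m j) = scaleR 2 (p - mid)"
      by (simp add: mid_def algebra_simps scaleR_2)
    have e2: "(p - m k) - (p - m j) = m j - m k" by simp
    have "(norm (scaleR 2 (p - mid)))^2 = 4 * (norm (p - mid))^2"
      by (simp add: power2_eq_square)
    moreover have "d^2 \<le> (norm (p - mid))^2" using dle[OF midM] d0 by (simp add: power_mono)
    ultimately have big: "4 * d^2 \<le> (norm ((p - m k) + (p - m j)))^2" by (simp add: e1)
    have "(norm (m j - m k))^2 = 2 * (norm (p - m k))^2 + 2 * (norm (p - m j))^2 - (norm ((p - m k) + (p - m j)))^2"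
      using para[of "p - m k" "p - m j"] by (simp add: e2)
    also have "\<dots> \<le> 2 * (d^2 + inverse (real (Suc k))) + 2 * (d^2 + inverse (real (Suc j))) - 4 * d^2"
      using md[of k] md[of j] big by (simp add: dist_norm)
    finally show ?thesis by simp
  qed
  have "Cauchy m"
  proof (rule metric_CauchyI)
    fix r :: real assume r: "r > 0"
    obtain N :: nat where N: "inverse (real (Suc N)) < r^2 / 4"
      using reals_Archimedean[of "r^2/4"] r by auto
    show "\<exists>N. \<forall>j\<ge>N. \<forall>k\<ge>N. dist (m j) (m k) < r"
    proof (intro exI allI impI)
      fix j k assume j: "j \<ge> N" and k: "k \<ge> N"
      have ij: "inverse (real (Suc j)) \<le> inverse (real (Suc N))" using j by (simp add: le_imp_inverse_le)
      have ik: "inverse (real (Suc k)) \<le> inverse (real (Suc N))" using k by (simp add: le_imp_inverse_le)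
      have "(dist (m j) (m k))^2 = (norm (m j - m k))^2" by (simp add: dist_norm)
      then have "(dist (m j) (m k))^2 < r^2"
        using cd[of j k] ij ik N by linarith
      then show "dist (m j) (m k) < r" using r by (meson power_less_imp_less_base less_le)
    qed
  qed
  then obtain L where L: "m \<longlonglongrightarrow> L" using Cauchy_convergent_iff convergent_def by blast
  have LM: "L \<in> M" using closed_sequentially[OF cl mM L] .
  have "(\<lambda>k. (dist p (m k))^2) \<longlonglongrightarrow> (dist p L)^2"
    by (intro tendsto_intros L)
  moreover have "(\<lambda>k. d^2 + inverse (real (Suc k))) \<longlonglongrightarrow> d^2 + 0"
    by (intro tendsto_intros LIMSEQ_inverse_real_of_nat)
  ultimately have qd: "(norm (p - L))^2 \<le> d^2"
    using md by (intro LIMSEQ_le[of "\<lambda>k. (dist p (m k))^2" _ "\<lambda>k. d^2 + inverse (real (Suc k))"])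
      (auto simp: dist_norm less_imp_le)
  define q where "q = p - L"
  have mini: "(norm q)^2 \<le> (norm (q - g))^2" if "g \<in> M" for g
  proof -
    have "L + g \<in> M" using M LM that by (simp add: csubspace_def)
    then have "d \<le> norm (p - (L + g))" by (rule dle)
    then have "d^2 \<le> (norm (q - g))^2" using d0 by (simp add: q_def power_mono algebra_simps)
    then show ?thesis using qd unfolding q_def by linarith
  qed
  have re0: "Re (cinner q g) = 0" if "g \<in> M" for g
  proof (rule var_zero[of "(norm g)^2"])
    fix t :: real
    have "scaleR t g \<in> M" using csubspace_scaleR[OF M that] .
    then have "(norm q)^2 \<le> (norm (q - scaleR t g))^2" by (rule mini)
    also have "\<dots> = (norm q)^2 + t^2 * (norm g)^2 - 2 * t * Re (cinner q g)"
      by (simp add: norm_diff_sq cinner_scaleR_right power_mult_distrib)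
    finally show "0 \<le> t^2 * (norm g)^2 - 2 * t * Re (cinner q g)" by simp
  qed simp
  have "cinner q g = 0" if "g \<in> M" for g
  proof -
    have "scaleC \<i> g \<in> M" using M that by (simp add: csubspace_def)
    then have "Re (cinner q (scaleC \<i> g)) = 0" by (rule re0)
    then have "Im (cinner q g) = 0" by (simp add: cinner_scaleC_right)
    with re0[OF that] show ?thesis by (simp add: complex_eq_iff)
  qed
  then show ?thesis using LM unfolding q_def by blast
qed



lemma is_op_csub: "is_op G \<Longrightarrow> csubspace G"
  unfolding is_op_def csubspace_def by (auto simp: zero_prod_def)

lemma is_op_unique: "is_op G \<Longrightarrow> (x, y) \<in> G \<Longrightarrow> (x, z) \<in> G \<Longrightarrow> y = z"
  unfolding is_op_def by blast

lemma app_unique: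
  assumes "\<And>z1 z2. (x, z1) \<in> G \<Longrightarrow> (x, z2) \<in> G \<Longrightarrow> z1 = z2" and "(x, y) \<in> G"
  shows "app G x = y"
  unfolding app_def using assms by (intro the_equality) auto

lemma is_op_app: "is_op G \<Longrightarrow> (x, y) \<in> G \<Longrightarrow> app G x = y"
  by (rule app_unique) (auto dest: is_op_unique)

lemma adj_iff: "(y, z) \<in> adj G \<longleftrightarrow> (\<forall>x w. (x, w) \<in> G \<longrightarrow> cinner w y = cinner x z)"
  unfolding adj_def by (simp add: Ball_def split_paired_All)

lemma adj_csub: "csubspace (adj G)"
  unfolding csubspace_def
proof (intro conjI ballI allI)
  show "0 \<in> adj G" by (auto simp: adj_iff zero_prod_def)
next
  fix p q assume p: "p \<in> adj G" and q: "q \<in> adj G"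
  show "p + q \<in> adj G"
    using p q by (cases p, cases q) (auto simp: adj_iff cinner_add_right)
next
  fix c p assume p: "p \<in> adj G"
  show "scaleC c p \<in> adj G"
    using p by (cases p) (auto simp: adj_iff cinner_scaleC_right)
qed

lemma bl_cinner_fst: "bounded_linear (\<lambda>p. cinner w (fst p))"
  by (rule bounded_linear_compose[OF bl_cinner_right bounded_linear_fst])
lemma bl_cinner_snd: "bounded_linear (\<lambda>p. cinner w (snd p))"
  by (rule bounded_linear_compose[OF bl_cinner_right bounded_linear_snd])

lemma adj_closed: "closed (adj (G :: ('a::complex_inner \<times> 'a) set))"
proof -
  have eq: "adj G = (\<Inter>q\<in>G. {p. cinner (snd q) (fst p) = cinner (fst q) (snd p)})"
    by (auto simp: adj_iff) (drule (1) bspec, simp)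
  show ?thesis unfolding eq
    by (intro closed_INT ballI closed_Collect_eq linear_continuous_on bl_cinner_fst bl_cinner_snd)
qed

lemma dense_orth:
  fixes A :: "'a::complex_inner set"
  assumes A: "closure A = UNIV" and h: "\<And>x. x \<in> A \<Longrightarrow> cinner x y = 0"
  shows "y = 0"
proof -
  have cl: "closed {x. cinner x y = 0}"
    by (intro closed_Collect_eq linear_continuous_on bl_cinner_left continuous_on_const)
  have "closure A \<subseteq> {x. cinner x y = 0}"
    by (rule closure_minimal) (use h cl in auto)
  then have "cinner y y = 0" using A by auto
  then show ?thesis by (simp add: cinner_eq_zero_iff)
qed

lemma adj_unique:
  fixes G :: "('a::complex_inner \<times> 'a) set"
  assumes dd: "closure (Domain G) = UNIV" and 1: "(y, z1) \<in> adj G" and 2: "(y, z2) \<in> adj G"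
  shows "z1 = z2"
proof -
  have "z1 - z2 = 0"
  proof (rule dense_orth[OF dd])
    fix x assume "x \<in> Domain G"
    then obtain w where "(x, w) \<in> G" by auto
    then have "cinner w y = cinner x z1" "cinner w y = cinner x z2"
      using 1 2 by (auto simp: adj_iff)
    then show "cinner x (z1 - z2) = 0" by (simp add: cinner_diff_right)
  qed
  then show ?thesis by simp
qed

lemma adj_converse: "adj (converse G) = converse (adj G)"
  by (auto simp: adj_iff)

lemma closed_converse:
  fixes A :: "('a::topological_space \<times> 'a) set"
  assumes "closed A" shows "closed (converse A)"
proof -
  have "converse A = (\<lambda>p. (snd p, fst p)) -` A" by auto
  then show ?thesis using assms
    by (simp add: continuous_closed_vimage continuous_intros)
qed

lemma restr_sub: "restr G D \<subseteq> G"
  by (auto simp: restr_def)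

lemma restr_csub:
  assumes "csubspace G" "csubspace D" shows "csubspace (restr G D)"
  unfolding csubspace_def
proof (intro conjI ballI allI)
  show "0 \<in> restr G D" using assms by (auto simp: restr_def csubspace_def zero_prod_def)
next
  fix p q assume p: "p \<in> restr G D" and q: "q \<in> restr G D"
  have "p \<in> G" "q \<in> G" "fst p \<in> D" "fst q \<in> D" using p q by (auto simp: restr_def)
  then have "p + q \<in> G" "fst (p + q) \<in> D" using assms by (auto simp: csubspace_def)
  then show "p + q \<in> restr G D" by (cases "p + q") (auto simp: restr_def)
next
  fix c p assume p: "p \<in> restr G D"
  have "p \<in> G" "fst p \<in> D" using p by (auto simp: restr_def)
  then have "scaleC c p \<in> G" "fst (scaleC c p) \<in> D" using assms by (auto simp: csubspace_def scaleC_prod_def)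
  then show "scaleC c p \<in> restr G D" by (cases "scaleC c p") (auto simp: restr_def)
qed



lemma core_lemma:
  fixes G N :: "('a::chilbert \<times> 'a) set"
  assumes clG: "closed G" and G: "csubspace G" and N: "csubspace N" and NG: "N \<subseteq> G"
    and orth: "\<And>q. q \<in> G \<Longrightarrow> (\<And>n. n \<in> N \<Longrightarrow> cinner q n = 0) \<Longrightarrow> q = 0"
  shows "closure N = G"
proof
  show "closure N \<subseteq> G" by (rule closure_minimal[OF NG clG])
  show "G \<subseteq> closure N"
  proof
    fix p assume pG: "p \<in> G"
    obtain m where m: "m \<in> closure N" and mo: "\<And>g. g \<in> closure N \<Longrightarrow> cinner (p - m) g = 0"
      using projection_exists[OF closed_closure csubspace_closure[OF N], of p] by blast
    have "m \<in> G" using m closure_minimal[OF NG clG] by blast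
    then have "p - m \<in> G" using csubspace_diff[OF G pG] by blast
    moreover have "\<And>n. n \<in> N \<Longrightarrow> cinner (p - m) n = 0" using mo closure_subset by blast
    ultimately have "p - m = 0" by (rule orth)
    then show "p \<in> closure N" using m by simp
  qed
qed

lemma key_surj:
  fixes T :: "('a::chilbert \<times> 'a) set"
  assumes op: "is_op T" and cl: "closed T"
  shows "\<exists>z w. (z, w) \<in> T \<and> (w, h - z) \<in> adj T"
proof -
  obtain m where m: "m \<in> T" and mo: "\<And>g. g \<in> T \<Longrightarrow> cinner ((h, 0) - m) g = 0"
    using projection_exists[OF cl is_op_csub[OF op], of "(h, 0)"] by blast
  obtain z w where mz: "m = (z, w)" by (cases m)
  have "(w, h - z) \<in> adj T"
    unfolding adj_iff
  proof (intro allI impI)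
    fix x y assume "(x, y) \<in> T"
    then have "cinner ((h, 0) - (z, w)) (x, y) = 0" using mo mz by blast
    then have "cinner (h - z) x - cinner w y = 0"
      by (simp add: cinner_Pair cinner_minus_left)
    then have "cinner w y = cinner (h - z) x" by simp
    then have "cnj (cinner w y) = cnj (cinner (h - z) x)" by simp
    then show "cinner y w = cinner x (h - z)"
      by (simp add: cinner_commute[of y w] cinner_commute[of x "h - z"])
  qed
  then show ?thesis using m mz by blast
qed

lemma Domain_csub:
  assumes "csubspace (G :: ('a::complex_vector \<times> 'a) set)" shows "csubspace (Domain G)"
  unfolding csubspace_def
proof (intro conjI ballI allI)
  show "0 \<in> Domain G" using assms by (auto simp: csubspace_def zero_prod_def Domain_iff)
next
  fix x y assume "x \<in> Domain G" "y \<in> Domain G"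
  then obtain a b where "(x, a) \<in> G" "(y, b) \<in> G" by auto
  moreover have "\<forall>p\<in>G. \<forall>q\<in>G. p + q \<in> G" using assms by (simp add: csubspace_def)
  ultimately have "(x, a) + (y, b) \<in> G" by blast
  then show "x + y \<in> Domain G" by force
next
  fix c x assume "x \<in> Domain G"
  then obtain a where "(x, a) \<in> G" by auto
  moreover have "\<forall>p\<in>G. scaleC c p \<in> G" using assms by (simp add: csubspace_def)
  ultimately have "scaleC c (x, a) \<in> G" by blast
  then show "scaleC c x \<in> Domain G" by force
qed

lemma Range_csub:
  assumes "csubspace (G :: ('a::complex_vector \<times> 'a) set)" shows "csubspace (Range G)"
  unfolding csubspace_def
proof (intro conjI ballI allI)
  show "0 \<in> Range G" using assms by (auto simp: csubspace_def zero_prod_def Range_iff)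
next
  fix x y assume "x \<in> Range G" "y \<in> Range G"
  then obtain a b where "(a, x) \<in> G" "(b, y) \<in> G" by auto
  moreover have "\<forall>p\<in>G. \<forall>q\<in>G. p + q \<in> G" using assms by (simp add: csubspace_def)
  ultimately have "(a, x) + (b, y) \<in> G" by blast
  then show "x + y \<in> Range G" by force
next
  fix c x assume "x \<in> Range G"
  then obtain a where "(a, x) \<in> G" by auto
  moreover have "\<forall>p\<in>G. scaleC c p \<in> G" using assms by (simp add: csubspace_def)
  ultimately have "scaleC c (a, x) \<in> G" by blast
  then show "scaleC c x \<in> Range G" by force
qed

lemma csubspace_Int: "csubspace A \<Longrightarrow> csubspace B \<Longrightarrow> csubspace (A \<inter> B)"
  by (simp add: csubspace_def)

lemma csubspace_sum:
  assumes D: "csubspace D"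
  shows "finite F \<Longrightarrow> (\<And>v. v \<in> F \<Longrightarrow> f v \<in> D) \<Longrightarrow> sum f F \<in> D"
proof (induction F rule: finite_induct)
  case empty then show ?case using D by (simp add: csubspace_def)
next
  case (insert x F) then show ?case using D by (simp add: csubspace_def)
qed

lemma cspan_sub: "csubspace D \<Longrightarrow> S \<subseteq> D \<Longrightarrow> cspan S \<subseteq> D"
proof
  fix x assume D: "csubspace D" and S: "S \<subseteq> D" and "x \<in> cspan S"
  then obtain F c where F: "finite F" "F \<subseteq> S" and x: "x = (\<Sum>v\<in>F. scaleC (c v) v)"
    by (auto simp: cspan_def)
  show "x \<in> D" unfolding x
    by (rule csubspace_sum[OF D F(1)]) (use D S F(2) in \<open>auto simp: csubspace_def\<close>)
qed



theorem proposition3p5: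
  fixes e \<phi> :: "nat \<Rightarrow> 'h::chilbert" and T :: "('h \<times> 'h) set"
  assumes cp: "constructing_pair e T \<phi>"
    and dom: "\<And>n. e n \<in> Domain (T O adj T) \<inter> Domain (adj (converse T) O converse T)"
  shows "quasi_basis \<phi> (\<lambda>n. app (adj (converse T)) (e n)) (Domain (adj T) \<inter> Domain (converse T))
    \<and> T = converse (closure (restr (T_seq e (\<lambda>n. app (adj (converse T)) (e n)))
                                 (Domain (adj T) \<inter> Domain (converse T))))
    \<and> adj (converse T) = converse (closure (restr (T_seq e \<phi>)
                                 (Domain (adj T) \<inter> Domain (converse T))))"
proof -
  from cp have onb: "ONB e" and opT: "is_op T" and clT: "closed T"
    and ddT: "closure (Domain T) = UNIV" and opS: "is_op (converse T)"
    and ddS0: "closure (Domain (converse T)) = UNIV"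
    and eDT: "\<And>n. e n \<in> Domain T" and eDS: "\<And>n. e n \<in> Domain (adj (converse T))"
    and appT: "\<And>n. app T (e n) = \<phi> n"
    unfolding constructing_pair_def densely_defined_def by auto
  define S where "S = converse T"
  define \<psi> where "\<psi> = (\<lambda>n. app (adj S) (e n))"
  define D where "D = Domain (adj T) \<inter> Domain S"
  have ddS: "closure (Domain S) = UNIV" using ddS0 by (simp add: S_def)
  have adjS: "adj S = converse (adj T)" unfolding S_def by (rule adj_converse)
  have on: "orthon e" using onb by (rule ONB_orthon)
  have adjT_u: "\<And>y z1 z2. (y, z1) \<in> adj T \<Longrightarrow> (y, z2) \<in> adj T \<Longrightarrow> z1 = z2"
    using adj_unique[OF ddT] by blast
  have adjS_u: "\<And>y z1 z2. (y, z1) \<in> adj S \<Longrightarrow> (y, z2) \<in> adj S \<Longrightarrow> z1 = z2"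
    using adj_unique[OF ddS] by blast
  have T_u: "\<And>x y z. (x, y) \<in> T \<Longrightarrow> (x, z) \<in> T \<Longrightarrow> y = z"
    using is_op_unique[OF opT] by blast
  have S_u: "\<And>x y z. (x, y) \<in> S \<Longrightarrow> (x, z) \<in> S \<Longrightarrow> y = z"
    using is_op_unique[OF opS] unfolding S_def by blast
  have eT: "(e n, \<phi> n) \<in> T" for n
  proof -
    obtain y where y: "(e n, y) \<in> T" using eDT[of n] by auto
    then have "app T (e n) = y" by (rule is_op_app[OF opT])
    then show ?thesis using y appT[of n] by simp
  qed
  have eS: "(e n, \<psi> n) \<in> adj S" for n
  proof -
    obtain y where y: "(e n, y) \<in> adj S" using eDS[of n] unfolding S_def by auto
    then have "app (adj S) (e n) = y" by (intro app_unique adjS_u) auto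
    then show ?thesis using y by (simp add: \<psi>_def)
  qed
  have psi_prop: "\<And>a b. (b, a) \<in> T \<Longrightarrow> cinner b (e n) = cinner a (\<psi> n)" for n
    using eS[of n] by (auto simp: adj_iff S_def)
  have phiD: "\<phi> n \<in> D" for n
  proof -
    obtain y z where "(e n, y) \<in> T" "(y, z) \<in> adj T" using dom[of n] by auto
    then have "\<phi> n \<in> Domain (adj T)" using T_u[OF eT[of n]] by auto
    moreover have "\<phi> n \<in> Domain S" using eT[of n] by (auto simp: S_def)
    ultimately show ?thesis by (simp add: D_def)
  qed
  have psiD: "\<psi> n \<in> D" for n
  proof -
    obtain y z where "(e n, y) \<in> adj S" "(y, z) \<in> S" using dom[of n] by (auto simp: S_def)
    then have "\<psi> n \<in> Domain S" using adjS_u[OF eS[of n]] by auto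
    moreover have "\<psi> n \<in> Domain (adj T)" using eS[of n] adjS by auto
    ultimately show ?thesis by (simp add: D_def)
  qed
  have csS: "csubspace S" using is_op_csub[OF opS] by (simp add: S_def)
  have csD: "csubspace D" unfolding D_def
    by (intro csubspace_Int Domain_csub adj_csub csS)
  have cphi: "cinner x (\<phi> n) = cinner (app (adj T) x) (e n)" if xA0: "x \<in> Domain (adj T)" for x n
  proof -
    obtain t where t: "(x, t) \<in> adj T" using xA0 by auto
    have ta: "app (adj T) x = t" using t by (intro app_unique adjT_u) auto
    have "cinner (\<phi> n) x = cinner (e n) t" using t eT[of n] by (auto simp: adj_iff)
    then have "cnj (cinner (\<phi> n) x) = cnj (cinner (e n) t)" by simp
    then show ?thesis by (simp add: ta cinner_commute[of x] cinner_commute[of t])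
  qed
  have cpsi: "cinner x (\<psi> n) = cinner (app S x) (e n)" if xS0: "x \<in> Domain S" for x n
  proof -
    obtain s where s: "(x, s) \<in> S" using xS0 by auto
    have sa: "app S x = s" using s by (intro app_unique S_u) auto
    have "(s, x) \<in> T" using s by (simp add: S_def)
    then show ?thesis using psi_prop[of s x n] sa by simp
  qed
  have Dphi: "D \<subseteq> Dseq \<phi>"
  proof
    fix x assume "x \<in> D"
    then have "x \<in> Domain (adj T)" by (simp add: D_def)
    then show "x \<in> Dseq \<phi>" using bessel[OF on, of "app (adj T) x"] by (simp add: Dseq_def cphi)
  qed
  have Dpsi: "D \<subseteq> Dseq \<psi>"
  proof
    fix x assume "x \<in> D"
    then have "x \<in> Domain S" by (simp add: D_def)
    then show "x \<in> Dseq \<psi>" using bessel[OF on, of "app S x"] by (simp add: Dseq_def cpsi)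
  qed
  have Tpsi: "restr (T_seq e \<psi>) D = restr S D"
  proof (intro set_eqI iffI)
    fix p assume p: "p \<in> restr (T_seq e \<psi>) D"
    obtain x y where pxy: "p = (x, y)" by (cases p)
    have xD: "x \<in> D" and y: "y = (\<Sum>n. scaleC (cinner x (\<psi> n)) (e n))"
      using p pxy by (auto simp: restr_def T_seq_def)
    have xS: "x \<in> Domain S" using xD by (simp add: D_def)
    then obtain s where s: "(x, s) \<in> S" by auto
    have sa: "app S x = s" using s by (intro app_unique S_u) auto
    have "y = (\<Sum>n. scaleC (cinner s (e n)) (e n))" using y cpsi[OF xS] sa by simp
    also have "\<dots> = s" using onb_sums[OF onb, of s] by (simp add: sums_iff)
    finally show "p \<in> restr S D" using s xD pxy by (simp add: restr_def)
  next
    fix p assume p: "p \<in> restr S D"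
    obtain x y where pxy: "p = (x, y)" by (cases p)
    have xD: "x \<in> D" and s: "(x, y) \<in> S" using p pxy by (auto simp: restr_def)
    have xS: "x \<in> Domain S" using xD by (simp add: D_def)
    have sa: "app S x = y" using s by (intro app_unique S_u) auto
    have "(\<Sum>n. scaleC (cinner x (\<psi> n)) (e n)) = (\<Sum>n. scaleC (cinner y (e n)) (e n))"
      using cpsi[OF xS] sa by simp
    also have "\<dots> = y" using onb_sums[OF onb, of y] by (simp add: sums_iff)
    finally show "p \<in> restr (T_seq e \<psi>) D"
      using xD Dpsi pxy by (auto simp: restr_def T_seq_def)
  qed
  have Tphi: "restr (T_seq e \<phi>) D = restr (adj T) D"
  proof (intro set_eqI iffI)
    fix p assume p: "p \<in> restr (T_seq e \<phi>) D"
    obtain x y where pxy: "p = (x, y)" by (cases p)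
    have xD: "x \<in> D" and y: "y = (\<Sum>n. scaleC (cinner x (\<phi> n)) (e n))"
      using p pxy by (auto simp: restr_def T_seq_def)
    have xA: "x \<in> Domain (adj T)" using xD by (simp add: D_def)
    then obtain t where t: "(x, t) \<in> adj T" by auto
    have ta: "app (adj T) x = t" using t by (intro app_unique adjT_u) auto
    have "y = (\<Sum>n. scaleC (cinner t (e n)) (e n))" using y cphi[OF xA] ta by simp
    also have "\<dots> = t" using onb_sums[OF onb, of t] by (simp add: sums_iff)
    finally show "p \<in> restr (adj T) D" using t xD pxy by (simp add: restr_def)
  next
    fix p assume p: "p \<in> restr (adj T) D"
    obtain x y where pxy: "p = (x, y)" by (cases p)
    have xD: "x \<in> D" and t: "(x, y) \<in> adj T" using p pxy by (auto simp: restr_def)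
    have xA: "x \<in> Domain (adj T)" using xD by (simp add: D_def)
    have ta: "app (adj T) x = y" using t by (intro app_unique adjT_u) auto
    have "(\<Sum>n. scaleC (cinner x (\<phi> n)) (e n)) = (\<Sum>n. scaleC (cinner y (e n)) (e n))"
      using cphi[OF xA] ta by simp
    also have "\<dots> = y" using onb_sums[OF onb, of y] by (simp add: sums_iff)
    finally show "p \<in> restr (T_seq e \<phi>) D"
      using xD Dphi pxy by (auto simp: restr_def T_seq_def)
  qed
  have K: "\<And>h. \<exists>z w. (z, w) \<in> T \<and> (w, h - z) \<in> adj T"
    using key_surj[OF opT clT] by blast
  have coreS: "closure (restr S D) = S"
  proof (rule core_lemma)
    show "closed S" unfolding S_def by (rule closed_converse[OF clT])
    show "csubspace S" by (rule csS)
    show "csubspace (restr S D)" by (rule restr_csub[OF csS csD])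
    show "restr S D \<subseteq> S" by (rule restr_sub)
  next
    fix q assume qS: "q \<in> S" and orth: "\<And>n. n \<in> restr S D \<Longrightarrow> cinner q n = 0"
    obtain a b where qab: "q = (a, b)" by (cases q)
    have baT: "(b, a) \<in> T" using qS qab by (simp add: S_def)
    obtain z w where zw: "(z, w) \<in> T" and wA: "(w, b - z) \<in> adj T" using K[of b] by blast
    have "(w, z) \<in> restr S D" using zw wA by (auto simp: restr_def S_def D_def)
    then have "cinner (a, b) (w, z) = 0" using orth qab by simp
    then have 1: "cinner a w + cinner b z = 0" by (simp add: cinner_Pair)
    have 2: "cinner a w = cinner b (b - z)" using wA baT by (auto simp: adj_iff)
    have "cinner b b = 0" using 1 2 by (simp add: cinner_diff_right)
    then have b0: "b = 0" by (simp add: cinner_eq_zero_iff)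
    have "(0, 0) \<in> T" using opT by (simp add: is_op_def)
    then have "a = 0" using T_u baT b0 by blast
    then show "q = 0" using qab b0 by (simp add: zero_prod_def)
  qed
  have coreA: "closure (restr (adj T) D) = adj T"
  proof (rule core_lemma)
    show "closed (adj T)" by (rule adj_closed)
    show "csubspace (adj T)" by (rule adj_csub)
    show "csubspace (restr (adj T) D)" by (rule restr_csub[OF adj_csub csD])
    show "restr (adj T) D \<subseteq> adj T" by (rule restr_sub)
  next
    fix q assume qA: "q \<in> adj T" and orth: "\<And>n. n \<in> restr (adj T) D \<Longrightarrow> cinner q n = 0"
    obtain y t where qyt: "q = (y, t)" by (cases q)
    obtain z w where zw: "(z, w) \<in> T" and wA: "(w, t - z) \<in> adj T" using K[of t] by blast
    have "(w, t - z) \<in> restr (adj T) D" using zw wA by (auto simp: restr_def S_def D_def)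
    then have "cinner (y, t) (w, t - z) = 0" using orth qyt by simp
    then have 1: "cinner y w + cinner t (t - z) = 0" by (simp add: cinner_Pair)
    have "cinner w y = cinner z t" using qA qyt zw by (auto simp: adj_iff)
    then have "cnj (cinner w y) = cnj (cinner z t)" by simp
    then have 2: "cinner y w = cinner t z" by (simp add: cinner_commute[of y w] cinner_commute[of t z])
    have "cinner t t = 0" using 1 2 by (simp add: cinner_diff_right)
    then have t0: "t = 0" by (simp add: cinner_eq_zero_iff)
    have "y = 0"
    proof (rule dense_orth[OF ddS])
      fix x assume "x \<in> Domain S"
      then obtain u where "(u, x) \<in> T" by (auto simp: S_def)
      then show "cinner x y = 0" using qA qyt t0 by (auto simp: adj_iff)
    qed
    then show "q = 0" using qyt t0 by (simp add: zero_prod_def)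
  qed
  have denseD: "closure D = UNIV"
  proof -
    have "fst ` closure (restr S D) \<subseteq> closure D"
    proof (rule image_closure_subset)
      show "continuous_on (closure (restr S D)) fst" by (intro continuous_intros)
      show "fst ` restr S D \<subseteq> closure D" using closure_subset by (force simp: restr_def)
    qed simp
    then have "Domain S \<subseteq> closure D" unfolding coreS by (force simp: Domain_fst)
    then have "closure (Domain S) \<subseteq> closure D" by (metis closure_closure closure_mono)
    then show ?thesis using ddS by auto
  qed
  have qb_sum: "(\<lambda>k. cinner x (\<phi> k) * cinner (\<psi> k) y) sums cinner x y" if "x \<in> D" "y \<in> D" for x y
  proof -
    have xA: "x \<in> Domain (adj T)" and yS: "y \<in> Domain S" using that by (auto simp: D_def)
    obtain t where t: "(x, t) \<in> adj T" using xA by auto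
    have ta: "app (adj T) x = t" using t by (intro app_unique adjT_u) auto
    obtain s where s: "(y, s) \<in> S" using yS by auto
    have sa: "app S y = s" using s by (intro app_unique S_u) auto
    have cps: "cinner (\<psi> k) y = cinner (e k) s" for k
    proof -
      have "cinner (\<psi> k) y = cnj (cinner y (\<psi> k))" by (rule cinner_commute)
      also have "\<dots> = cnj (cinner s (e k))" using cpsi[OF yS] sa by simp
      also have "\<dots> = cinner (e k) s" by (simp add: cinner_commute[of "e k" s])
      finally show ?thesis .
    qed
    have "(\<lambda>k. cinner x (\<phi> k) * cinner (\<psi> k) y) = (\<lambda>k. cinner t (e k) * cinner (e k) s)"
      using cphi[OF xA] ta cps by simp
    moreover have "(\<lambda>k. cinner t (e k) * cinner (e k) s) sums cinner t s" by (rule parseval[OF onb])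
    moreover have "cinner t s = cinner x y"
    proof -
      have "(s, y) \<in> T" using s by (simp add: S_def)
      then have "cinner y x = cinner s t" using t by (auto simp: adj_iff)
      then have "cnj (cinner y x) = cnj (cinner s t)" by simp
      then show ?thesis by (simp add: cinner_commute[of y x] cinner_commute[of s t])
    qed
    ultimately show ?thesis by simp
  qed
  have bio: "biorthogonal \<phi> \<psi>"
    unfolding biorthogonal_def
  proof (intro allI)
    fix n m
    have "cinner (e n) (e m) = cinner (\<phi> n) (\<psi> m)" using psi_prop[OF eT[of n], of m] .
    then show "cinner (\<phi> n) (\<psi> m) = (if n = m then 1 else 0)" using on by (simp add: orthon_def)
  qed
  have spans: "Dspan \<phi> \<union> Dspan \<psi> \<subseteq> D"
    unfolding Dspan_def using cspan_sub[OF csD] phiD psiD by blast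
  have qb: "quasi_basis \<phi> \<psi> D"
    unfolding quasi_basis_def using bio csD denseD spans Dphi Dpsi qb_sum by blast
  have eq2: "T = converse (closure (restr (T_seq e \<psi>) D))"
    using coreS Tpsi by (simp add: S_def)
  have eq3: "adj S = converse (closure (restr (T_seq e \<phi>) D))"
    using coreA Tphi adjS by simp
  show ?thesis using qb eq2 eq3 unfolding S_def \<psi>_def D_def by blast
qed


end
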